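(* Let $A=kQ/I$ be a toupie algebra over a field $k$ of characteristic zero. The set $K=\{s\}\cup C'_1\cup C_3$ is a basis of $\operatorname{Im}D_0$, where $s=\sum_{\alpha^{(i)}}\alpha^i_0\|\alpha^i_0$ (sum over all branches of $Q$), $C'_1=\{\alpha^i_j\|\alpha^i_j-\alpha^i_0\|\alpha^i_0: j\ne0,\ \alpha^{(i)}\text{ a branch containing monomial relations}\}$ and $C_3=\{\alpha^i_j\|\alpha^i_j-\alpha^i_0\|\alpha^i_0: j\ne0,\ \alpha^{(i)}\text{ of length }>1\text{ containing no monomial relation}\}$.
   Context: A finite quiver $Q$ is a toupie quiver if it has a unique source $0$, a unique sink $\omega$, and every other vertex is the source of exactly one arrow and the target of exactly one arrow. Paths are composed left to right. A branch is a path from $0$ to $\omega$; the arrows of a branch $\alpha^{(i)}$ are $\alpha^i_0,\alpha^i_1,\dots$ in order, $\alpha^i_0$ starting at $0$. A toupie algebra is $A=kQ/I$ with $Q$ toupie and $I$ an admissible ideal generated by monomial relations (paths inside one branch) and non-monomial relations (linear combinations of branches). $E=kQ_0$, $e_x$ the trivial path at $x$. For an arrow $\gamma$ and $h\in e_{s(\gamma)}Ae_{t(\gamma)}$, $\gamma\|h$ is the $E$-bimodule map $kQ_1\to A$ sending $\gamma$ to $h$ and other arrows to $0$; $e_x\|e_x\in\mathrm{Hom}_{E^e}(E,A)$ sends $e_x$ to $e_x$ and other idempotents to $0$. $D_0:\mathrm{Hom}_{E^e}(E,A)\to\mathrm{Hom}_{E^e}(kQ_1,A)$ is the linear map with $D_0(e_x\|e_x)=\sum_{t(\gamma)=x}\gamma\|\gamma-\sum_{s(\gamma)=x}\gamma\|\gamma$.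 *)

theory Defs
  imports Main "HOL-Library.Function_Algebras"
begin

record ('v, 'a) quiver =
  verts :: "'v set"
  arrs  :: "'a set"
  src   :: "'a \<Rightarrow> 'v"
  tgt   :: "'a \<Rightarrow> 'v"

text \<open>A path is a start vertex together with its list of arrows (composed left
to right); the trivial path e_x is (x, []).\<close>
type_synonym ('v, 'a) path = "'v \<times> 'a list"

definition valid_path :: "('v, 'a, 'r) quiver_scheme \<Rightarrow> ('v, 'a) path \<Rightarrow> bool" where
  "valid_path Q p \<longleftrightarrow> fst p \<in> verts Q \<and> set (snd p) \<subseteq> arrs Q \<and>
     (snd p \<noteq> [] \<longrightarrow> src Q (hd (snd p)) = fst p) \<and>
     (\<forall>i. Suc i < length (snd p) \<longrightarrow> tgt Q (snd p ! i) = src Q (snd p ! Suc i))"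

definition pend :: "('v, 'a, 'r) quiver_scheme \<Rightarrow> ('v, 'a) path \<Rightarrow> 'v" where
  "pend Q p = (if snd p = [] then fst p else tgt Q (last (snd p)))"

definition toupie :: "('v, 'a, 'r) quiver_scheme \<Rightarrow> 'v \<Rightarrow> 'v \<Rightarrow> bool" where
  "toupie Q z w \<longleftrightarrow> finite (verts Q) \<and> finite (arrs Q) \<and>
     (\<forall>\<gamma>\<in>arrs Q. src Q \<gamma> \<in> verts Q \<and> tgt Q \<gamma> \<in> verts Q) \<and>
     z \<noteq> w \<and>
     {v \<in> verts Q. \<not> (\<exists>\<gamma>\<in>arrs Q. tgt Q \<gamma> = v)} = {z} \<and>
     {v \<in> verts Q. \<not> (\<exists>\<gamma>\<in>arrs Q. src Q \<gamma> = v)} = {w} \<and>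
     (\<forall>v \<in> verts Q - {z, w}. card {\<gamma> \<in> arrs Q. src Q \<gamma> = v} = 1 \<and>
                              card {\<gamma> \<in> arrs Q. tgt Q \<gamma> = v} = 1)"

definition branch :: "('v, 'a, 'r) quiver_scheme \<Rightarrow> 'v \<Rightarrow> 'v \<Rightarrow> ('v, 'a) path \<Rightarrow> bool" where
  "branch Q z w p \<longleftrightarrow> valid_path Q p \<and> fst p = z \<and> pend Q p = w \<and> snd p \<noteq> []"

definition subpath :: "('v, 'a, 'r) quiver_scheme \<Rightarrow> ('v, 'a) path \<Rightarrow> ('v, 'a) path \<Rightarrow> bool" where
  "subpath Q m b \<longleftrightarrow> valid_path Q m \<and> (\<exists>u v. snd b = u @ snd m @ v \<and> fst m = pend Q (fst b, u))"

definition pathalg :: "('v, 'a, 'r) quiver_scheme \<Rightarrow> (('v, 'a) path \<Rightarrow> 'k::field) set" where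
  "pathalg Q = {f. finite {p. f p \<noteq> 0} \<and> (\<forall>p. f p \<noteq> 0 \<longrightarrow> valid_path Q p)}"

definition pth :: "('v, 'a) path \<Rightarrow> ('v, 'a) path \<Rightarrow> 'k::field" where
  "pth p = (\<lambda>q. if q = p then 1 else 0)"

definition pmult :: "('v, 'a, 'r) quiver_scheme \<Rightarrow> (('v, 'a) path \<Rightarrow> 'k::field)
    \<Rightarrow> (('v, 'a) path \<Rightarrow> 'k) \<Rightarrow> ('v, 'a) path \<Rightarrow> 'k" where
  "pmult Q f g p = (\<Sum>i\<in>{0..length (snd p)}.
      f (fst p, take i (snd p)) * g (pend Q (fst p, take i (snd p)), drop i (snd p)))"

inductive_set gen_ideal :: "('v, 'a, 'r) quiver_scheme \<Rightarrow> (('v, 'a) path \<Rightarrow> 'k::field) set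
    \<Rightarrow> (('v, 'a) path \<Rightarrow> 'k) set"
  for Q G where
  gen: "g \<in> G \<Longrightarrow> g \<in> gen_ideal Q G"
| zero: "(\<lambda>_. 0) \<in> gen_ideal Q G"
| add: "x \<in> gen_ideal Q G \<Longrightarrow> y \<in> gen_ideal Q G \<Longrightarrow> (\<lambda>p. x p + y p) \<in> gen_ideal Q G"
| smult: "x \<in> gen_ideal Q G \<Longrightarrow> (\<lambda>p. c * x p) \<in> gen_ideal Q G"
| mult: "x \<in> gen_ideal Q G \<Longrightarrow> a \<in> pathalg Q \<Longrightarrow> b \<in> pathalg Q \<Longrightarrow>
         pmult Q (pmult Q a x) b \<in> gen_ideal Q G"

text \<open>Admissible: R^m \<subseteq> I \<subseteq> R^2 for some m \<ge> 2, R the arrow ideal.\<close>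
definition admissible :: "('v, 'a, 'r) quiver_scheme \<Rightarrow> (('v, 'a) path \<Rightarrow> 'k::field) set \<Rightarrow> bool" where
  "admissible Q I \<longleftrightarrow> I \<subseteq> pathalg Q \<and>
     (\<forall>f\<in>I. \<forall>p. length (snd p) < 2 \<longrightarrow> f p = 0) \<and>
     (\<exists>m\<ge>2. \<forall>p. valid_path Q p \<and> length (snd p) \<ge> m \<longrightarrow> pth p \<in> I)"

text \<open>Toupie algebra: Mon = monomial relations (paths inside a branch),
NM = non-monomial relations (linear combinations of branches); I is generated by both.\<close>
definition toupie_alg :: "('v, 'a, 'r) quiver_scheme \<Rightarrow> 'v \<Rightarrow> 'v \<Rightarrow> ('v, 'a) path set
    \<Rightarrow> (('v, 'a) path \<Rightarrow> 'k::field) set \<Rightarrow> bool" where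
  "toupie_alg Q z w Mon NM \<longleftrightarrow> toupie Q z w \<and>
     (\<forall>m\<in>Mon. \<exists>b. branch Q z w b \<and> subpath Q m b) \<and>
     (\<forall>r\<in>NM. r \<in> pathalg Q \<and> (\<forall>p. r p \<noteq> 0 \<longrightarrow> branch Q z w p)) \<and>
     admissible Q (gen_ideal Q (pth ` Mon \<union> NM))"

definition rel_ideal :: "('v, 'a, 'r) quiver_scheme \<Rightarrow> ('v, 'a) path set
    \<Rightarrow> (('v, 'a) path \<Rightarrow> 'k::field) set \<Rightarrow> (('v, 'a) path \<Rightarrow> 'k) set" where
  "rel_ideal Q Mon NM = gen_ideal Q (pth ` Mon \<union> NM)"

text \<open>An E-bimodule map kQ_1 \<rightarrow> A = kQ/I is determined by the images of the arrows;
we represent it by a function assigning to each arrow a representative in kQ.\<close>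
type_synonym ('v, 'a, 'k) hom1 = "'a \<Rightarrow> ('v, 'a) path \<Rightarrow> 'k"

definition bar :: "'a \<Rightarrow> (('v, 'a) path \<Rightarrow> 'k::field) \<Rightarrow> ('v, 'a, 'k) hom1" where
  "bar \<gamma> h = (\<lambda>\<delta>. if \<delta> = \<gamma> then h else (\<lambda>_. 0))"

definition arr_hom :: "('v, 'a, 'r) quiver_scheme \<Rightarrow> 'a \<Rightarrow> ('v, 'a, 'k::field) hom1" where
  "arr_hom Q \<gamma> = bar \<gamma> (pth (src Q \<gamma>, [\<gamma>]))"

definition hsmult :: "'k::field \<Rightarrow> ('v, 'a, 'k) hom1 \<Rightarrow> ('v, 'a, 'k) hom1" where
  "hsmult c \<phi> = (\<lambda>\<gamma> p. c * \<phi> \<gamma> p)"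

definition hom_eq :: "('v, 'a, 'r) quiver_scheme \<Rightarrow> (('v, 'a) path \<Rightarrow> 'k::field) set
    \<Rightarrow> ('v, 'a, 'k) hom1 \<Rightarrow> ('v, 'a, 'k) hom1 \<Rightarrow> bool" where
  "hom_eq Q I \<phi> \<psi> \<longleftrightarrow> (\<forall>\<gamma>\<in>arrs Q. (\<lambda>p. \<phi> \<gamma> p - \<psi> \<gamma> p) \<in> I)"

definition D0 :: "('v, 'a, 'r) quiver_scheme \<Rightarrow> 'v \<Rightarrow> ('v, 'a, 'k::field) hom1" where
  "D0 Q x = (\<Sum>\<gamma>\<in>{\<gamma>\<in>arrs Q. tgt Q \<gamma> = x}. arr_hom Q \<gamma>)
          - (\<Sum>\<gamma>\<in>{\<gamma>\<in>arrs Q. src Q \<gamma> = x}. arr_hom Q \<gamma>)"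

text \<open>Im D_0: D_0 is the linear map determined by its values on the basis e_x||e_x.\<close>
definition ImD0 :: "('v, 'a, 'r) quiver_scheme \<Rightarrow> (('v, 'a) path \<Rightarrow> 'k::field) set
    \<Rightarrow> ('v, 'a, 'k) hom1 set" where
  "ImD0 Q I = {\<phi>. \<exists>c. hom_eq Q I \<phi> (\<Sum>x\<in>verts Q. hsmult (c x) (D0 Q x))}"

definition hom_basis :: "('v, 'a, 'r) quiver_scheme \<Rightarrow> (('v, 'a) path \<Rightarrow> 'k::field) set
    \<Rightarrow> ('v, 'a, 'k) hom1 set \<Rightarrow> ('v, 'a, 'k) hom1 set \<Rightarrow> bool" where
  "hom_basis Q I K V \<longleftrightarrow> K \<subseteq> V \<and>
     (\<forall>\<phi>\<in>V. \<exists>F c. finite F \<and> F \<subseteq> K \<and> hom_eq Q I \<phi> (\<Sum>f\<in>F. hsmult (c f) f)) \<and>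
     (\<forall>F c. finite F \<longrightarrow> F \<subseteq> K \<longrightarrow> hom_eq Q I (\<Sum>f\<in>F. hsmult (c f) f) 0
            \<longrightarrow> (\<forall>f\<in>F. c f = 0))"

definition s_elem :: "('v, 'a, 'r) quiver_scheme \<Rightarrow> 'v \<Rightarrow> 'v \<Rightarrow> ('v, 'a, 'k::field) hom1" where
  "s_elem Q z w = (\<Sum>b\<in>{b. branch Q z w b}. arr_hom Q (snd b ! 0))"

definition C1' :: "('v, 'a, 'r) quiver_scheme \<Rightarrow> 'v \<Rightarrow> 'v \<Rightarrow> ('v, 'a) path set
    \<Rightarrow> ('v, 'a, 'k::field) hom1 set" where
  "C1' Q z w Mon = {arr_hom Q (snd b ! j) - arr_hom Q (snd b ! 0) | b j.
      branch Q z w b \<and> 0 < j \<and> j < length (snd b) \<and> (\<exists>m\<in>Mon. subpath Q m b)}"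

definition C3 :: "('v, 'a, 'r) quiver_scheme \<Rightarrow> 'v \<Rightarrow> 'v \<Rightarrow> ('v, 'a) path set
    \<Rightarrow> ('v, 'a, 'k::field) hom1 set" where
  "C3 Q z w Mon = {arr_hom Q (snd b ! j) - arr_hom Q (snd b ! 0) | b j.
      branch Q z w b \<and> 0 < j \<and> j < length (snd b) \<and> length (snd b) > 1 \<and>
      \<not> (\<exists>m\<in>Mon. subpath Q m b)}"

end

theory Submission imports Defs begin

lemma sum_fapp: "(sum g F) x = (\<Sum>f\<in>F. g f x)"
  by (induction F rule: infinite_finite_induct) auto

lemma valid_path_iff: "valid_path Q (x, l) \<longleftrightarrow> x \<in> verts Q \<and> set l \<subseteq> arrs Q \<and>
   (l \<noteq> [] \<longrightarrow> src Q (hd l) = x) \<and> successively (\<lambda>a b. tgt Q a = src Q b) l"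
  by (auto simp: valid_path_def successively_conv_nth hd_conv_nth)

locale TA =
  fixes Q :: "('v,'a) quiver" and z w :: 'v and Mon :: "('v,'a) path set"
    and NM :: "(('v,'a) path \<Rightarrow> 'k::field) set"
  assumes TA: "toupie_alg Q z w Mon NM"
begin

abbreviation "R \<equiv> (\<lambda>a b. tgt Q a = src Q b)"
abbreviation "II \<equiv> rel_ideal Q Mon NM"

lemma tp: "toupie Q z w" using TA by (simp add: toupie_alg_def)
lemma finv: "finite (verts Q)" using tp by (simp add: toupie_def)
lemma fina: "finite (arrs Q)" using tp by (simp add: toupie_def)
lemma srcv: "\<gamma> \<in> arrs Q \<Longrightarrow> src Q \<gamma> \<in> verts Q" using tp by (simp add: toupie_def)
lemma tgtv: "\<gamma> \<in> arrs Q \<Longrightarrow> tgt Q \<gamma> \<in> verts Q" using tp by (simp add: toupie_def)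
lemma zw: "z \<noteq> w" using tp by (simp add: toupie_def)
lemma zv: "z \<in> verts Q" using tp unfolding toupie_def by blast
lemma wv: "w \<in> verts Q" using tp unfolding toupie_def by blast
lemma tgt_nz: "\<gamma> \<in> arrs Q \<Longrightarrow> tgt Q \<gamma> \<noteq> z"
proof
  assume a: "\<gamma> \<in> arrs Q" "tgt Q \<gamma> = z"
  have "z \<in> {v \<in> verts Q. \<not> (\<exists>\<gamma>\<in>arrs Q. tgt Q \<gamma> = v)}" using tp unfolding toupie_def by blast
  thus False using a by blast
qed
lemma src_nw: "\<gamma> \<in> arrs Q \<Longrightarrow> src Q \<gamma> \<noteq> w"
proof
  assume a: "\<gamma> \<in> arrs Q" "src Q \<gamma> = w"
  have "w \<in> {v \<in> verts Q. \<not> (\<exists>\<gamma>\<in>arrs Q. src Q \<gamma> = v)}" using tp unfolding toupie_def by blast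
  thus False using a by blast
qed
lemma has_in: "v \<in> verts Q \<Longrightarrow> v \<noteq> z \<Longrightarrow> \<exists>\<gamma>\<in>arrs Q. tgt Q \<gamma> = v"
proof (rule ccontr)
  assume "v \<in> verts Q" "v \<noteq> z" "\<not> (\<exists>\<gamma>\<in>arrs Q. tgt Q \<gamma> = v)"
  hence "v \<in> {v \<in> verts Q. \<not> (\<exists>\<gamma>\<in>arrs Q. tgt Q \<gamma> = v)}" by blast
  thus False using tp \<open>v \<noteq> z\<close> unfolding toupie_def by blast
qed
lemma has_out: "v \<in> verts Q \<Longrightarrow> v \<noteq> w \<Longrightarrow> \<exists>\<gamma>\<in>arrs Q. src Q \<gamma> = v"
proof (rule ccontr)
  assume "v \<in> verts Q" "v \<noteq> w" "\<not> (\<exists>\<gamma>\<in>arrs Q. src Q \<gamma> = v)"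
  hence "v \<in> {v \<in> verts Q. \<not> (\<exists>\<gamma>\<in>arrs Q. src Q \<gamma> = v)}" by blast
  thus False using tp \<open>v \<noteq> w\<close> unfolding toupie_def by blast
qed
lemma card1_eq: "card S = 1 \<Longrightarrow> a \<in> S \<Longrightarrow> b \<in> S \<Longrightarrow> a = b"
  by (metis card_1_singletonE singletonD)
lemma uniq_in: "v \<in> verts Q \<Longrightarrow> v \<noteq> z \<Longrightarrow> v \<noteq> w \<Longrightarrow> a \<in> arrs Q \<Longrightarrow> b \<in> arrs Q
   \<Longrightarrow> tgt Q a = v \<Longrightarrow> tgt Q b = v \<Longrightarrow> a = b"
proof -
  assume h: "v \<in> verts Q" "v \<noteq> z" "v \<noteq> w" "a \<in> arrs Q" "b \<in> arrs Q" "tgt Q a = v" "tgt Q b = v"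
  have "card {\<gamma> \<in> arrs Q. tgt Q \<gamma> = v} = 1" using tp h unfolding toupie_def by blast
  thus "a = b" by (rule card1_eq) (use h in auto)
qed
lemma uniq_out: "v \<in> verts Q \<Longrightarrow> v \<noteq> z \<Longrightarrow> v \<noteq> w \<Longrightarrow> a \<in> arrs Q \<Longrightarrow> b \<in> arrs Q
   \<Longrightarrow> src Q a = v \<Longrightarrow> src Q b = v \<Longrightarrow> a = b"
proof -
  assume h: "v \<in> verts Q" "v \<noteq> z" "v \<noteq> w" "a \<in> arrs Q" "b \<in> arrs Q" "src Q a = v" "src Q b = v"
  have "card {\<gamma> \<in> arrs Q. src Q \<gamma> = v} = 1" using tp h unfolding toupie_def by blast
  thus "a = b" by (rule card1_eq) (use h in auto)
qed

definition br :: "'a list \<Rightarrow> bool" where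
  "br l \<longleftrightarrow> l \<noteq> [] \<and> set l \<subseteq> arrs Q \<and> src Q (hd l) = z \<and> successively R l \<and> tgt Q (last l) = w"

lemma branch_iff: "branch Q z w b \<longleftrightarrow> fst b = z \<and> br (snd b)"
  using zv by (cases b) (auto simp: branch_def br_def valid_path_iff pend_def)

lemma br_arr: "br l \<Longrightarrow> j < length l \<Longrightarrow> l ! j \<in> arrs Q"
  unfolding br_def by auto
lemma br_chain: "br l \<Longrightarrow> Suc j < length l \<Longrightarrow> tgt Q (l ! j) = src Q (l ! Suc j)"
  unfolding br_def using successively_nth by blast
lemma br_src0: "br l \<Longrightarrow> src Q (l ! 0) = z"
  unfolding br_def by (auto simp: hd_conv_nth)
lemma br_last: "br l \<Longrightarrow> tgt Q (l ! (length l - 1)) = w"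
  unfolding br_def by (auto simp: last_conv_nth)
lemma br_src_nz: "br l \<Longrightarrow> 0 < j \<Longrightarrow> j < length l \<Longrightarrow> src Q (l ! j) \<noteq> z"
  by (metis Suc_pred br_arr br_chain less_imp_Suc_add less_nat_zero_code tgt_nz zero_less_Suc
        Suc_lessD)


lemma adm: "admissible Q II" using TA by (simp add: toupie_alg_def rel_ideal_def)
lemma short: "f \<in> II \<Longrightarrow> length (snd p) < 2 \<Longrightarrow> f p = 0"
  using adm unfolding admissible_def by blast

definition BA where "BA = {a. \<exists>l. br l \<and> a \<in> set l}"

lemma mon_arrs: "m \<in> Mon \<Longrightarrow> set (snd m) \<subseteq> BA"
proof -
  assume "m \<in> Mon"
  then obtain b where b: "branch Q z w b" "subpath Q m b" using TA unfolding toupie_alg_def by blast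
  then obtain u v where "snd b = u @ snd m @ v" unfolding subpath_def by blast
  moreover have "br (snd b)" using b branch_iff by blast
  ultimately show ?thesis unfolding BA_def by auto
qed

lemma nm_arrs: "r \<in> NM \<Longrightarrow> r p \<noteq> 0 \<Longrightarrow> set (snd p) \<subseteq> BA"
proof -
  assume "r \<in> NM" "r p \<noteq> 0"
  hence "branch Q z w p" using TA unfolding toupie_alg_def by blast
  hence "br (snd p)" using branch_iff by blast
  thus ?thesis unfolding BA_def by auto
qed

lemma inv:
  assumes bad: "Bad \<inter> BA = {}"
  shows "f \<in> gen_ideal Q (pth ` Mon \<union> NM) \<Longrightarrow> snd p \<noteq> [] \<Longrightarrow> set (snd p) \<subseteq> Bad \<Longrightarrow> f p = 0"
proof (induction f arbitrary: p rule: gen_ideal.induct)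
  case (gen g)
  from gen.hyps show ?case
  proof (elim UnE)
    assume "g \<in> pth ` Mon"
    then obtain m where m: "m \<in> Mon" "g = pth m" by blast
    have "p \<noteq> m" using mon_arrs[OF m(1)] gen bad by (cases "snd p") auto
    thus ?thesis using m by (simp add: pth_def)
  next
    assume "g \<in> NM"
    show ?thesis
    proof (rule ccontr)
      assume "g p \<noteq> 0"
      hence "set (snd p) \<subseteq> BA" using nm_arrs \<open>g \<in> NM\<close> by blast
      thus False using gen bad by (cases "snd p") auto
    qed
  qed
next
  case zero thus ?case by simp
next
  case (add x y) thus ?case by simp
next
  case (smult x c) thus ?case by simp
next
  case (mult x a b)
  have xI: "x \<in> II" using mult.hyps(1) by (simp add: rel_ideal_def)
  have "pmult Q a x q = 0" if q: "set (snd q) \<subseteq> set (snd p)" for q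
    unfolding pmult_def
  proof (rule sum.neutral, rule ballI)
    fix j
    have "x (pend Q (fst q, take j (snd q)), drop j (snd q)) = 0"
    proof (cases "drop j (snd q) = []")
      case True
      thus ?thesis using short xI by simp
    next
      case False
      have "set (drop j (snd q)) \<subseteq> set (snd p)"
        using q by (meson order_trans set_drop_subset)
      thus ?thesis using mult.IH[of "(pend Q (fst q, take j (snd q)), drop j (snd q))"] False mult.prems by auto
    qed
    thus "a (fst q, take j (snd q)) * x (pend Q (fst q, take j (snd q)), drop j (snd q)) = 0" by simp
  qed
  hence "pmult Q a x (fst p, take i (snd p)) = 0" for i by (simp add: set_take_subset)
  thus ?case unfolding pmult_def[of Q "pmult Q a x"] by simp
qed

lemma nobad:
  assumes bad: "Bad \<inter> BA = {}" "Bad \<subseteq> arrs Q"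
    and long: "\<And>n. \<exists>l. n \<le> length l \<and> l \<noteq> [] \<and> set l \<subseteq> Bad \<and> successively R l"
  shows False
proof -
  obtain m where m: "\<forall>p. valid_path Q p \<and> length (snd p) \<ge> m \<longrightarrow> pth p \<in> II"
    using adm unfolding admissible_def by blast
  obtain l where l: "m \<le> length l" "l \<noteq> []" "set l \<subseteq> Bad" "successively R l" using long by blast
  have "hd l \<in> arrs Q" using l(2,3) bad(2) hd_in_set by blast
  hence "valid_path Q (src Q (hd l), l)" using l bad srcv by (auto simp: valid_path_iff)
  hence "pth (src Q (hd l), l) \<in> gen_ideal Q (pth ` Mon \<union> NM)" using m l by (auto simp: rel_ideal_def)
  from inv[OF bad(1) this, of "(src Q (hd l), l)"] l show False by (simp add: pth_def)
qed

lemma back_chain: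
  assumes "\<forall>\<delta>\<in>Bad. \<exists>\<epsilon>\<in>Bad. R \<epsilon> \<delta>"
  shows "\<delta> \<in> Bad \<Longrightarrow> \<exists>l. length l = Suc n \<and> set l \<subseteq> Bad \<and> successively R l \<and> last l = \<delta>"
proof (induction n arbitrary: \<delta>)
  case 0 thus ?case by (intro exI[of _ "[\<delta>]"]) auto
next
  case (Suc n)
  then obtain \<epsilon> where e: "\<epsilon> \<in> Bad" "R \<epsilon> \<delta>" using assms by blast
  then obtain l where l: "length l = Suc n" "set l \<subseteq> Bad" "successively R l" "last l = \<epsilon>" using Suc by blast
  show ?case using l e Suc.prems
    by (intro exI[of _ "l @ [\<delta>]"]) (auto simp: successively_append_iff)
qed

lemma fwd_chain:
  assumes "\<forall>\<delta>\<in>Bad. \<exists>\<epsilon>\<in>Bad. R \<delta> \<epsilon>"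
  shows "\<delta> \<in> Bad \<Longrightarrow> \<exists>l. length l = Suc n \<and> set l \<subseteq> Bad \<and> successively R l \<and> hd l = \<delta>"
proof (induction n arbitrary: \<delta>)
  case 0 thus ?case by (intro exI[of _ "[\<delta>]"]) auto
next
  case (Suc n)
  then obtain \<epsilon> where e: "\<epsilon> \<in> Bad" "R \<delta> \<epsilon>" using assms by blast
  then obtain l where l: "length l = Suc n" "set l \<subseteq> Bad" "successively R l" "hd l = \<epsilon>" using Suc by blast
  show ?case using l e Suc.prems
    by (intro exI[of _ "\<delta> # l"]) (auto simp: successively_Cons)
qed

lemma succ_take: "successively P l \<Longrightarrow> successively P (take n l)"
  by (metis append_take_drop_id successively_append_iff)
lemma succ_drop: "successively P l \<Longrightarrow> successively P (drop n l)"
  by (metis append_take_drop_id successively_append_iff)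

definition Pre where "Pre \<delta> \<longleftrightarrow> (\<exists>l. valid_path Q (z, l @ [\<delta>]))"
definition Post where "Post \<delta> \<longleftrightarrow> (\<exists>l. set (\<delta> # l) \<subseteq> arrs Q \<and> successively R (\<delta> # l) \<and> tgt Q (last (\<delta> # l)) = w)"

lemma BA_Pre: "a \<in> BA \<Longrightarrow> Pre a"
proof -
  assume "a \<in> BA"
  then obtain l where l: "br l" "a \<in> set l" unfolding BA_def by blast
  then obtain j where j: "j < length l" "l ! j = a" by (meson in_set_conv_nth)
  have e: "take j l @ [a] = take (Suc j) l" using j by (simp add: take_Suc_conv_app_nth)
  have "valid_path Q (z, take (Suc j) l)" using l(1) zv
    by (auto simp: valid_path_iff br_def succ_take dest: in_set_takeD)
  thus ?thesis unfolding Pre_def e[symmetric] by blast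
qed

lemma BA_Post: "a \<in> BA \<Longrightarrow> Post a"
proof -
  assume "a \<in> BA"
  then obtain l where l: "br l" "a \<in> set l" unfolding BA_def by blast
  then obtain j where j: "j < length l" "l ! j = a" by (meson in_set_conv_nth)
  have e: "a # drop (Suc j) l = drop j l" using j by (metis Cons_nth_drop_Suc)
  have "set (drop j l) \<subseteq> arrs Q" "successively R (drop j l)" "tgt Q (last (drop j l)) = w"
    using l(1) j by (auto simp: br_def succ_drop dest: in_set_dropD)
  thus ?thesis unfolding Post_def e[symmetric] by blast
qed

lemma all_Pre: "\<delta> \<in> arrs Q \<Longrightarrow> Pre \<delta>"
proof (rule ccontr)
  let ?B = "{\<delta> \<in> arrs Q. \<not> Pre \<delta>}"
  assume d: "\<delta> \<in> arrs Q" "\<not> Pre \<delta>"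
  have cl: "\<forall>\<delta>\<in>?B. \<exists>\<epsilon>\<in>?B. R \<epsilon> \<delta>"
  proof
    fix \<delta> assume "\<delta> \<in> ?B"
    hence d: "\<delta> \<in> arrs Q" "\<not> Pre \<delta>" by auto
    have "src Q \<delta> \<noteq> z"
    proof
      assume "src Q \<delta> = z"
      hence "valid_path Q (z, [] @ [\<delta>])" using d zv by (auto simp: valid_path_iff)
      thus False using d unfolding Pre_def by blast
    qed
    then obtain \<epsilon> where e: "\<epsilon> \<in> arrs Q" "tgt Q \<epsilon> = src Q \<delta>" using has_in srcv d by blast
    have "\<not> Pre \<epsilon>"
    proof
      assume "Pre \<epsilon>"
      then obtain l where "valid_path Q (z, l @ [\<epsilon>])" unfolding Pre_def by blast
      hence "valid_path Q (z, (l @ [\<epsilon>]) @ [\<delta>])" using e d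
        by (auto simp: valid_path_iff successively_append_iff) (auto simp: hd_append)
      thus False using d unfolding Pre_def by blast
    qed
    thus "\<exists>\<epsilon>\<in>?B. R \<epsilon> \<delta>" using e by blast
  qed
  show False
  proof (rule nobad[of ?B])
    show "?B \<inter> BA = {}" using BA_Pre by blast
    show "?B \<subseteq> arrs Q" by blast
    fix n
    obtain l where "length l = Suc n \<and> set l \<subseteq> ?B \<and> successively R l \<and> last l = \<delta>"
      using back_chain[OF cl, of \<delta> n] d by blast
    thus "\<exists>l. n \<le> length l \<and> l \<noteq> [] \<and> set l \<subseteq> ?B \<and> successively R l" by (intro exI[of _ l]) auto
  qed
qed

lemma all_Post: "\<delta> \<in> arrs Q \<Longrightarrow> Post \<delta>"
proof (rule ccontr)
  let ?B = "{\<delta> \<in> arrs Q. \<not> Post \<delta>}"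
  assume d: "\<delta> \<in> arrs Q" "\<not> Post \<delta>"
  have cl: "\<forall>\<delta>\<in>?B. \<exists>\<epsilon>\<in>?B. R \<delta> \<epsilon>"
  proof
    fix \<delta> assume "\<delta> \<in> ?B"
    hence d: "\<delta> \<in> arrs Q" "\<not> Post \<delta>" by auto
    have "tgt Q \<delta> \<noteq> w"
    proof
      assume "tgt Q \<delta> = w"
      hence "set [\<delta>] \<subseteq> arrs Q \<and> successively R [\<delta>] \<and> tgt Q (last [\<delta>]) = w" using d by auto
      thus False using d unfolding Post_def by blast
    qed
    then obtain \<epsilon> where e: "\<epsilon> \<in> arrs Q" "src Q \<epsilon> = tgt Q \<delta>" using has_out tgtv d by blast
    have "\<not> Post \<epsilon>"
    proof
      assume "Post \<epsilon>"
      then obtain l where l: "set (\<epsilon> # l) \<subseteq> arrs Q" "successively R (\<epsilon> # l)" "tgt Q (last (\<epsilon> # l)) = w"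
        unfolding Post_def by blast
      hence "set (\<delta> # \<epsilon> # l) \<subseteq> arrs Q \<and> successively R (\<delta> # \<epsilon> # l) \<and> tgt Q (last (\<delta> # \<epsilon> # l)) = w"
        using e d by (auto simp: successively_Cons)
      thus False using d unfolding Post_def by blast
    qed
    thus "\<exists>\<epsilon>\<in>?B. R \<delta> \<epsilon>" using e by (intro bexI[of _ \<epsilon>]) auto
  qed
  show False
  proof (rule nobad[of ?B])
    show "?B \<inter> BA = {}" using BA_Post by blast
    show "?B \<subseteq> arrs Q" by blast
    fix n
    obtain l where "length l = Suc n \<and> set l \<subseteq> ?B \<and> successively R l \<and> hd l = \<delta>"
      using fwd_chain[OF cl, of \<delta> n] d by blast
    thus "\<exists>l. n \<le> length l \<and> l \<noteq> [] \<and> set l \<subseteq> ?B \<and> successively R l" by (intro exI[of _ l]) auto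
  qed
qed

lemma on_branch: "\<gamma> \<in> arrs Q \<Longrightarrow> \<exists>l j. br l \<and> j < length l \<and> l ! j = \<gamma>"
proof -
  assume g: "\<gamma> \<in> arrs Q"
  obtain l1 where l1: "valid_path Q (z, l1 @ [\<gamma>])" using all_Pre[OF g] unfolding Pre_def by blast
  obtain l2 where l2: "set (\<gamma> # l2) \<subseteq> arrs Q" "successively R (\<gamma> # l2)" "tgt Q (last (\<gamma> # l2)) = w"
    using all_Post[OF g] unfolding Post_def by blast
  have e: "l1 @ \<gamma> # l2 = (l1 @ [\<gamma>]) @ l2" by simp
  have "br (l1 @ \<gamma> # l2)" using l1 l2 unfolding br_def valid_path_iff e
    by (auto simp: successively_append_iff successively_Cons hd_append split: if_splits)
  thus ?thesis by (intro exI[of _ "l1 @ \<gamma> # l2"] exI[of _ "length l1"]) auto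
qed


lemma pos_uniq: "br l \<Longrightarrow> br l' \<Longrightarrow> j < length l \<Longrightarrow> j' < length l' \<Longrightarrow> l ! j = l' ! j'
   \<Longrightarrow> j = j' \<and> l ! 0 = l' ! 0"
proof (induction j arbitrary: j')
  case 0
  show ?case
  proof (cases j')
    case 0 thus ?thesis using "0.prems" by simp
  next
    case (Suc i)
    have "src Q (l' ! j') \<noteq> z" using br_src_nz[OF "0.prems"(2)] Suc "0.prems" by simp
    thus ?thesis using br_src0[OF "0.prems"(1)] "0.prems" by simp
  qed
next
  case (Suc j)
  have nz: "src Q (l ! Suc j) \<noteq> z" using br_src_nz[OF Suc.prems(1), of "Suc j"] Suc.prems by simp
  then obtain i where i: "j' = Suc i"
    using br_src0[OF Suc.prems(2)] Suc.prems by (cases j') auto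
  let ?v = "src Q (l ! Suc j)"
  have v: "?v \<in> verts Q" "?v \<noteq> w" using srcv src_nw br_arr Suc.prems by auto
  have t1: "tgt Q (l ! j) = ?v" using br_chain Suc.prems by simp
  have t2: "tgt Q (l' ! i) = ?v" using br_chain[OF Suc.prems(2), of i] Suc.prems i by simp
  have "l ! j = l' ! i"
    by (rule uniq_in[OF v(1) nz v(2) _ _ t1 t2]) (use br_arr Suc.prems i in auto)
  from Suc.IH[OF Suc.prems(1,2) _ _ this] Suc.prems i show ?case by simp
qed

lemma br_agree: "br l \<Longrightarrow> br l' \<Longrightarrow> l ! 0 = l' ! 0 \<Longrightarrow> i < length l \<Longrightarrow> i < length l' \<Longrightarrow> l ! i = l' ! i"
proof (induction i)
  case 0 thus ?case by simp
next
  case (Suc i)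
  let ?v = "tgt Q (l ! i)"
  have e: "l ! i = l' ! i" using Suc by simp
  have a: "l ! i \<in> arrs Q" "l ! Suc i \<in> arrs Q" "l' ! Suc i \<in> arrs Q" using br_arr Suc.prems by auto
  have s1: "src Q (l ! Suc i) = ?v" using br_chain Suc.prems by simp
  have s2: "src Q (l' ! Suc i) = ?v" using br_chain[OF Suc.prems(2), of i] Suc.prems e by simp
  have v: "?v \<in> verts Q" "?v \<noteq> z" "?v \<noteq> w" using tgtv tgt_nz src_nw a s1 by metis+
  show ?case by (rule uniq_out[OF v _ _ s1 s2]) (use a in auto)
qed

lemma br_len_le: "br l \<Longrightarrow> br l' \<Longrightarrow> l ! 0 = l' ! 0 \<Longrightarrow> length l \<le> length l'"
proof (rule ccontr)
  assume h: "br l" "br l'" "l ! 0 = l' ! 0" "\<not> length l \<le> length l'"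
  let ?n = "length l'"
  have n: "?n \<noteq> 0" using h(2) br_def by auto
  have "l ! (?n - 1) = l' ! (?n - 1)" using br_agree[OF h(1-3)] h(4) n by auto
  hence "tgt Q (l ! (?n - 1)) = w" using br_last[OF h(2)] by simp
  moreover have "tgt Q (l ! (?n - 1)) = src Q (l ! ?n)" using br_chain[OF h(1), of "?n - 1"] h(4) n by simp
  moreover have "l ! ?n \<in> arrs Q" using br_arr h by auto
  ultimately show False using src_nw by metis
qed

lemma br_eq: "br l \<Longrightarrow> br l' \<Longrightarrow> l ! 0 = l' ! 0 \<Longrightarrow> l = l'"
  by (metis br_agree br_len_le le_antisym nth_equalityI)

lemma br_distinct: "br l \<Longrightarrow> distinct l"
  unfolding distinct_conv_nth using pos_uniq by blast

lemma fin_br: "finite {b. branch Q z w b}"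
proof -
  have "inj_on (\<lambda>b. snd b ! 0) {b. branch Q z w b}"
    by (rule inj_onI) (metis branch_iff br_eq prod.collapse mem_Collect_eq)
  moreover have "(\<lambda>b. snd b ! 0) ` {b. branch Q z w b} \<subseteq> arrs Q"
    using br_arr branch_iff br_def by fastforce
  ultimately show ?thesis using finite_imageD finite_subset fina by blast
qed

definition rho where "rho \<gamma> = (SOME \<delta>. \<exists>l j. br l \<and> j < length l \<and> l ! j = \<gamma> \<and> \<delta> = l ! 0)"

lemma rho_br: "br l \<Longrightarrow> j < length l \<Longrightarrow> rho (l ! j) = l ! 0"
proof -
  assume h: "br l" "j < length l"
  have "\<exists>l' j'. br l' \<and> j' < length l' \<and> l' ! j' = l ! j \<and> rho (l ! j) = l' ! 0"
    unfolding rho_def by (rule someI_ex) (use h in blast)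
  thus ?thesis using pos_uniq h by metis
qed

lemma rho_props: "\<gamma> \<in> arrs Q \<Longrightarrow> rho \<gamma> \<in> arrs Q \<and> src Q (rho \<gamma>) = z"
  using on_branch rho_br br_arr br_src0 br_def by (metis length_greater_0_conv)


definition cv :: "('v,'a,'k) hom1 \<Rightarrow> 'a \<Rightarrow> 'k" where "cv \<phi> \<gamma> = \<phi> \<gamma> (src Q \<gamma>, [\<gamma>])"
definition AL :: "('v,'a,'k) hom1 \<Rightarrow> bool" where
  "AL \<phi> \<longleftrightarrow> (\<forall>\<gamma> p. p \<noteq> (src Q \<gamma>, [\<gamma>]) \<longrightarrow> \<phi> \<gamma> p = 0)"

lemma AL_arr: "AL (arr_hom Q \<delta>)" by (simp add: AL_def arr_hom_def bar_def pth_def)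
lemma cv_arr: "cv (arr_hom Q \<delta>) \<gamma> = (if \<gamma> = \<delta> then 1 else 0)" by (simp add: cv_def arr_hom_def bar_def pth_def)
lemma AL_diff: "AL \<phi> \<Longrightarrow> AL \<psi> \<Longrightarrow> AL (\<phi> - \<psi>)" by (simp add: AL_def)
lemma cv_diff: "cv (\<phi> - \<psi>) \<gamma> = cv \<phi> \<gamma> - cv \<psi> \<gamma>" by (simp add: cv_def)
lemma cv_add: "cv (\<phi> + \<psi>) \<gamma> = cv \<phi> \<gamma> + cv \<psi> \<gamma>" by (simp add: cv_def)
lemma AL_sm: "AL \<phi> \<Longrightarrow> AL (hsmult c \<phi>)" by (simp add: AL_def hsmult_def)
lemma cv_sm: "cv (hsmult c \<phi>) \<gamma> = c * cv \<phi> \<gamma>" by (simp add: cv_def hsmult_def)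
lemma AL_zero: "AL 0" by (simp add: AL_def)
lemma cv_zero: "cv 0 \<gamma> = 0" by (simp add: cv_def)
lemma AL_sum: "(\<And>f. f \<in> F \<Longrightarrow> AL (g f)) \<Longrightarrow> AL (\<Sum>f\<in>F. g f)"
  unfolding AL_def sum_fapp by (auto intro!: sum.neutral)
lemma cv_sum: "cv (\<Sum>f\<in>F. g f) \<gamma> = (\<Sum>f\<in>F. cv (g f) \<gamma>)"
  by (simp add: cv_def sum_fapp)
lemma AL_eq: "AL \<phi> \<Longrightarrow> AL \<psi> \<Longrightarrow> cv \<phi> \<gamma> = cv \<psi> \<gamma> \<Longrightarrow> \<phi> \<gamma> = \<psi> \<gamma>"
  unfolding AL_def cv_def by (rule ext) (metis (no_types))

lemma hom_eq_AL: "AL \<phi> \<Longrightarrow> AL \<psi> \<Longrightarrow> hom_eq Q II \<phi> \<psi> \<longleftrightarrow> (\<forall>\<gamma>\<in>arrs Q. cv \<phi> \<gamma> = cv \<psi> \<gamma>)"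
proof
  assume "hom_eq Q II \<phi> \<psi>"
  show "\<forall>\<gamma>\<in>arrs Q. cv \<phi> \<gamma> = cv \<psi> \<gamma>"
  proof
    fix \<gamma> assume "\<gamma> \<in> arrs Q"
    hence "(\<lambda>p. \<phi> \<gamma> p - \<psi> \<gamma> p) \<in> II" using \<open>hom_eq Q II \<phi> \<psi>\<close> unfolding hom_eq_def by (rule bspec[rotated])
    from short[OF this, of "(src Q \<gamma>, [\<gamma>])"] show "cv \<phi> \<gamma> = cv \<psi> \<gamma>" by (simp add: cv_def)
  qed
next
  assume a: "AL \<phi>" "AL \<psi>" "\<forall>\<gamma>\<in>arrs Q. cv \<phi> \<gamma> = cv \<psi> \<gamma>"
  show "hom_eq Q II \<phi> \<psi>" unfolding hom_eq_def
  proof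
    fix \<gamma> assume "\<gamma> \<in> arrs Q"
    hence "\<phi> \<gamma> = \<psi> \<gamma>" using AL_eq[OF a(1,2)] a(3) by simp
    hence "(\<lambda>p. \<phi> \<gamma> p - \<psi> \<gamma> p) = (\<lambda>_. 0)" by simp
    thus "(\<lambda>p. \<phi> \<gamma> p - \<psi> \<gamma> p) \<in> II" by (simp add: rel_ideal_def gen_ideal.zero)
  qed
qed

lemma hom_eq_tr: "hom_eq Q J \<phi> \<psi> \<Longrightarrow> (\<forall>\<gamma>\<in>arrs Q. \<psi> \<gamma> = \<chi> \<gamma>) \<Longrightarrow> hom_eq Q J \<phi> \<chi>"
  by (simp add: hom_eq_def)

lemma cv_sum_arr: "finite S \<Longrightarrow> cv (\<Sum>\<delta>\<in>S. arr_hom Q \<delta>) \<gamma> = (if \<gamma> \<in> S then 1 else 0)"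
  by (simp add: cv_sum cv_arr)

lemma AL_D0: "AL (D0 Q x)" unfolding D0_def
  by (intro AL_diff AL_sum AL_arr)
lemma cv_D0: "\<gamma> \<in> arrs Q \<Longrightarrow> cv (D0 Q x) \<gamma> = (if tgt Q \<gamma> = x then 1 else 0) - (if src Q \<gamma> = x then 1 else 0)"
  unfolding D0_def cv_diff using fina by (simp add: cv_sum_arr)

abbreviation psi :: "('v \<Rightarrow> 'k) \<Rightarrow> ('v,'a,'k) hom1" where
  "psi c \<equiv> (\<Sum>x\<in>verts Q. hsmult (c x) (D0 Q x))"

lemma AL_psi: "AL (psi c)" by (intro AL_sum AL_sm AL_D0)
lemma cv_psi: "\<gamma> \<in> arrs Q \<Longrightarrow> cv (psi c) \<gamma> = c (tgt Q \<gamma>) - c (src Q \<gamma>)"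
proof -
  assume g: "\<gamma> \<in> arrs Q"
  have "cv (psi c) \<gamma> = (\<Sum>x\<in>verts Q. c x * ((if tgt Q \<gamma> = x then 1 else 0) - (if src Q \<gamma> = x then 1 else 0)))"
    by (simp add: cv_sum cv_sm cv_D0 g)
  also have "\<dots> = (\<Sum>x\<in>verts Q. (if tgt Q \<gamma> = x then c x else 0)) - (\<Sum>x\<in>verts Q. (if src Q \<gamma> = x then c x else 0))"
    by (subst sum_subtractf[symmetric]) (rule sum.cong, auto)
  also have "\<dots> = c (tgt Q \<gamma>) - c (src Q \<gamma>)" using finv srcv tgtv g by simp
  finally show ?thesis .
qed

lemma ImD0_AL: "AL \<phi> \<Longrightarrow> (\<forall>\<gamma>\<in>arrs Q. cv \<phi> \<gamma> = c (tgt Q \<gamma>) - c (src Q \<gamma>)) \<Longrightarrow> \<phi> \<in> ImD0 Q II"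
proof -
  assume a: "AL \<phi>" "\<forall>\<gamma>\<in>arrs Q. cv \<phi> \<gamma> = c (tgt Q \<gamma>) - c (src Q \<gamma>)"
  have "hom_eq Q II \<phi> (psi c)" using a cv_psi by (subst hom_eq_AL[OF a(1) AL_psi]) simp
  thus ?thesis unfolding ImD0_def by blast
qed


abbreviation sE :: "('v,'a,'k) hom1" where "sE \<equiv> s_elem Q z w"
abbreviation C1k :: "('v,'a,'k) hom1 set" where "C1k \<equiv> C1' Q z w Mon"
abbreviation C3k :: "('v,'a,'k) hom1 set" where "C3k \<equiv> C3 Q z w Mon"
definition NN where "NN = {\<gamma> \<in> arrs Q. src Q \<gamma> \<noteq> z}"
definition e :: "'a \<Rightarrow> ('v,'a,'k) hom1" where "e \<gamma> = arr_hom Q \<gamma> - arr_hom Q (rho \<gamma>)"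

lemma finNN: "finite NN" unfolding NN_def using fina by simp

lemma AL_s: "AL sE" unfolding s_elem_def by (intro AL_sum AL_arr)
lemma AL_e: "AL (e \<eta>)" unfolding e_def by (intro AL_diff AL_arr)

lemma cv_s: "\<gamma> \<in> arrs Q \<Longrightarrow> cv sE \<gamma> = (if src Q \<gamma> = z then 1 else 0)"
proof -
  assume g: "\<gamma> \<in> arrs Q"
  have c: "cv sE \<gamma> = (\<Sum>b\<in>{b. branch Q z w b}. (if \<gamma> = snd b ! 0 then 1 else 0))"
    unfolding s_elem_def by (simp add: cv_sum cv_arr)
  show ?thesis
  proof (cases "src Q \<gamma> = z")
    case True
    obtain l j where l: "br l" "j < length l" "l ! j = \<gamma>" using on_branch g by blast
    have j: "j = 0" using br_src_nz[OF l(1), of j] l True by (cases j) auto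
    have b0: "(z, l) \<in> {b. branch Q z w b}" using l branch_iff by simp
    have "(\<Sum>b\<in>{b. branch Q z w b}. (if \<gamma> = snd b ! 0 then 1 else 0)) =
          (\<Sum>b\<in>{b. branch Q z w b}. (if b = (z, l) then 1 else (0::'k)))"
    proof (rule sum.cong)
      fix b assume "b \<in> {b. branch Q z w b}"
      hence b: "fst b = z" "br (snd b)" using branch_iff by auto
      have "\<gamma> = snd b ! 0 \<longleftrightarrow> b = (z, l)"
      proof
        assume "\<gamma> = snd b ! 0"
        hence "snd b = l" using br_eq[OF b(2) l(1)] l j by simp
        thus "b = (z, l)" using b by (metis prod.collapse)
      qed (use l j in auto)
      thus "(if \<gamma> = snd b ! 0 then 1 else 0) = (if b = (z, l) then 1 else (0::'k))" by simp
    qed simp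
    also have "\<dots> = 1" using fin_br b0 by simp
    finally show ?thesis using c True by simp
  next
    case False
    have "(\<Sum>b\<in>{b. branch Q z w b}. (if \<gamma> = snd b ! 0 then 1 else (0::'k))) = 0"
    proof (rule sum.neutral, rule ballI)
      fix b assume "b \<in> {b. branch Q z w b}"
      hence "br (snd b)" using branch_iff by auto
      hence "src Q (snd b ! 0) = z" by (rule br_src0)
      thus "(if \<gamma> = snd b ! 0 then 1 else (0::'k)) = 0" using False by auto
    qed
    thus ?thesis using c False by simp
  qed
qed

lemma cv_e: "cv (e \<eta>) \<gamma> = (if \<gamma> = \<eta> then 1 else 0) - (if \<gamma> = rho \<eta> then 1 else 0)"
  unfolding e_def by (simp add: cv_diff cv_arr)

lemma rhoNN: "\<eta> \<in> NN \<Longrightarrow> rho \<eta> \<in> arrs Q \<and> src Q (rho \<eta>) = z \<and> rho \<eta> \<noteq> \<eta>"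
  using rho_props unfolding NN_def by force

lemma cv_e_NN: "\<eta> \<in> NN \<Longrightarrow> \<eta>' \<in> NN \<Longrightarrow> cv (e \<eta>') \<eta> = (if \<eta> = \<eta>' then 1 else 0)"
  using rhoNN unfolding cv_e NN_def by auto

lemma e_inj: "inj_on e NN"
proof (rule inj_onI)
  fix x y assume h: "x \<in> NN" "y \<in> NN" "e x = e y"
  have "cv (e x) x = cv (e y) x" using h by simp
  moreover have "cv (e x) x = 1" "cv (e y) x = (if x = y then 1 else 0)" using cv_e_NN[OF h(1) h(1)] cv_e_NN[OF h(1) h(2)] by auto
  ultimately show "x = y" by (auto split: if_splits)
qed

lemma s_notin: "sE \<notin> e ` NN"
proof
  assume "sE \<in> e ` NN"
  then obtain \<eta> where h: "\<eta> \<in> NN" "sE = e \<eta>" by blast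
  have "cv sE \<eta> = cv (e \<eta>) \<eta>" using h by simp
  moreover have "cv sE \<eta> = 0" using cv_s h unfolding NN_def by auto
  moreover have "cv (e \<eta>) \<eta> = 1" using cv_e_NN h by auto
  ultimately show False by simp
qed

lemma C_eq: "C1k \<union> C3k = e ` NN"
proof
  show "C1k \<union> C3k \<subseteq> e ` NN"
  proof
    fix f assume "f \<in> C1k \<union> C3k"
    then obtain b j where bj: "f = arr_hom Q (snd b ! j) - arr_hom Q (snd b ! 0)" "branch Q z w b"
      "0 < j" "j < length (snd b)" unfolding C1'_def C3_def by blast
    have l: "br (snd b)" using bj branch_iff by auto
    have "snd b ! j \<in> NN" using br_arr[OF l] br_src_nz[OF l] bj unfolding NN_def by auto
    moreover have "f = e (snd b ! j)" using bj rho_br[OF l] unfolding e_def by simp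
    ultimately show "f \<in> e ` NN" by blast
  qed
next
  show "e ` NN \<subseteq> C1k \<union> C3k"
  proof
    fix f assume "f \<in> e ` NN"
    then obtain \<eta> where h: "\<eta> \<in> NN" "f = e \<eta>" by blast
    obtain l j where l: "br l" "j < length l" "l ! j = \<eta>" using on_branch h unfolding NN_def by blast
    have j: "0 < j" using br_src0[OF l(1)] l h unfolding NN_def by (cases j) auto
    have b: "branch Q z w (z, l)" using l branch_iff by simp
    have "rho \<eta> = l ! 0" using rho_br[OF l(1,2)] l(3) by simp
    hence f: "f = arr_hom Q (snd (z, l) ! j) - arr_hom Q (snd (z, l) ! 0)" using h l unfolding e_def by simp
    show "f \<in> C1k \<union> C3k"
    proof (cases "\<exists>m\<in>Mon. subpath Q m (z, l)")
      case True
      hence "f \<in> C1k" unfolding C1'_def using b j l f by auto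
      thus ?thesis by blast
    next
      case False
      hence "f \<in> C3k" unfolding C3_def using b j l f
        by (intro CollectI exI[of _ "(z, l)"] exI[of _ j]) auto
      thus ?thesis by blast
    qed
  qed
qed

lemma cob_br: "br l \<Longrightarrow> j < length l \<Longrightarrow> \<exists>c. \<forall>\<gamma>\<in>arrs Q.
   (if \<gamma> = l ! j then 1 else 0) - (if \<gamma> = l ! 0 then 1 else 0) = (c (tgt Q \<gamma>) - c (src Q \<gamma>) :: 'k)"
proof (induction j)
  case 0 thus ?case by (intro exI[of _ "\<lambda>_. 0"]) simp
next
  case (Suc j)
  then obtain c1 where c1: "\<forall>\<gamma>\<in>arrs Q. (if \<gamma> = l ! j then 1 else 0) - (if \<gamma> = l ! 0 then 1 else 0) = (c1 (tgt Q \<gamma>) - c1 (src Q \<gamma>) :: 'k)"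
    by auto
  let ?v = "tgt Q (l ! j)"
  have a: "l ! j \<in> arrs Q" "l ! Suc j \<in> arrs Q" using br_arr Suc.prems by auto
  have s1: "src Q (l ! Suc j) = ?v" using br_chain Suc.prems by simp
  have v: "?v \<in> verts Q" "?v \<noteq> z" "?v \<noteq> w" using tgtv tgt_nz src_nw a s1 by metis+
  have it: "\<gamma> \<in> arrs Q \<Longrightarrow> tgt Q \<gamma> = ?v \<longleftrightarrow> \<gamma> = l ! j" for \<gamma>
    using uniq_in[OF v, of \<gamma> "l ! j"] a by auto
  have isrc: "\<gamma> \<in> arrs Q \<Longrightarrow> src Q \<gamma> = ?v \<longleftrightarrow> \<gamma> = l ! Suc j" for \<gamma>
    using uniq_out[OF v, of \<gamma> "l ! Suc j"] a s1 by auto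
  show ?case
  proof (intro exI[of _ "\<lambda>x. c1 x - (if x = ?v then 1 else 0)"] ballI)
    fix \<gamma> assume g: "\<gamma> \<in> arrs Q"
    show "(if \<gamma> = l ! Suc j then 1 else 0) - (if \<gamma> = l ! 0 then 1 else 0) =
      (c1 (tgt Q \<gamma>) - (if tgt Q \<gamma> = ?v then 1 else 0)) - (c1 (src Q \<gamma>) - (if src Q \<gamma> = ?v then 1 else (0::'k)))"
      using c1[rule_format, OF g] it[OF g] isrc[OF g] by (auto simp: algebra_simps split: if_splits)
  qed
qed

lemma cob_e: "\<eta> \<in> NN \<Longrightarrow> \<exists>c. \<forall>\<gamma>\<in>arrs Q. cv (e \<eta>) \<gamma> = c (tgt Q \<gamma>) - c (src Q \<gamma>)"
proof -
  assume h: "\<eta> \<in> NN"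
  obtain l j where l: "br l" "j < length l" "l ! j = \<eta>" using on_branch h unfolding NN_def by blast
  show ?thesis using cob_br[OF l(1,2)] l rho_br[OF l(1,2)] unfolding cv_e by simp
qed

lemma tele: "successively R l \<Longrightarrow> l \<noteq> [] \<Longrightarrow>
  sum_list (map (\<lambda>\<gamma>. c (tgt Q \<gamma>) - c (src Q \<gamma>)) l) = (c (tgt Q (last l)) - c (src Q (hd l)) :: 'k)"
proof (induction l)
  case Nil thus ?case by simp
next
  case (Cons a l)
  show ?case
  proof (cases "l = []")
    case True thus ?thesis by simp
  next
    case False
    have "successively R l" "R a (hd l)" using Cons.prems False by (auto simp: successively_Cons)
    thus ?thesis using Cons.IH False by simp
  qed
qed


abbreviation KK :: "('v,'a,'k) hom1 set" where "KK \<equiv> insert sE (e ` NN)"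

lemma K_eq: "{sE} \<union> C1k \<union> C3k = KK" using C_eq by auto
lemma AL_K: "f \<in> KK \<Longrightarrow> AL f" using AL_s AL_e by auto
lemma finK: "finite KK" using finNN by simp

lemma K_sub: "KK \<subseteq> ImD0 Q II"
proof
  fix f assume "f \<in> KK"
  then show "f \<in> ImD0 Q II"
  proof
    assume f: "f = sE"
    show ?thesis unfolding f
      by (rule ImD0_AL[OF AL_s, of "\<lambda>x. if x = z then -1 else 0"]) (auto simp: cv_s tgt_nz)
  next
    assume "f \<in> e ` NN"
    then obtain \<eta> where h: "\<eta> \<in> NN" "f = e \<eta>" by blast
    obtain c where "\<forall>\<gamma>\<in>arrs Q. cv (e \<eta>) \<gamma> = c (tgt Q \<gamma>) - c (src Q \<gamma>)" using cob_e[OF h(1)] by blast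
    thus ?thesis unfolding h(2) by (rule ImD0_AL[OF AL_e])
  qed
qed


lemma first_sum:
  fixes c :: "'v \<Rightarrow> 'k"
  assumes g: "\<gamma> \<in> arrs Q" "src Q \<gamma> = z"
  shows "(\<Sum>\<eta>\<in>{\<eta>\<in>NN. rho \<eta> = \<gamma>}. c (tgt Q \<eta>) - c (src Q \<eta>)) = (c w - c z) - (c (tgt Q \<gamma>) - c (src Q \<gamma>))"
proof -
  let ?g = "\<lambda>\<eta>. c (tgt Q \<eta>) - c (src Q \<eta>)"
  obtain l j where l: "br l" "j < length l" "l ! j = \<gamma>" using on_branch g by blast
  have j: "j = 0" using br_src_nz[OF l(1), of j] l g by (cases j) auto
  have l0: "l ! 0 = \<gamma>" using l j by simp
  have ne: "l \<noteq> []" using l by auto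
  have seq: "{\<eta>\<in>NN. rho \<eta> = \<gamma>} = set l - {\<gamma>}"
  proof
    show "{\<eta>\<in>NN. rho \<eta> = \<gamma>} \<subseteq> set l - {\<gamma>}"
    proof
      fix \<eta> assume h: "\<eta> \<in> {\<eta>\<in>NN. rho \<eta> = \<gamma>}"
      obtain l' j' where l': "br l'" "j' < length l'" "l' ! j' = \<eta>" using on_branch h unfolding NN_def by blast
      have "l' ! 0 = \<gamma>" using rho_br[OF l'(1,2)] l' h by simp
      hence "l' = l" using br_eq[OF l'(1) l(1)] l0 by simp
      hence "\<eta> \<in> set l" using l' by auto
      moreover have "\<eta> \<noteq> \<gamma>" using h g unfolding NN_def by auto
      ultimately show "\<eta> \<in> set l - {\<gamma>}" by blast
    qed
  next
    show "set l - {\<gamma>} \<subseteq> {\<eta>\<in>NN. rho \<eta> = \<gamma>}"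
    proof
      fix \<eta> assume h: "\<eta> \<in> set l - {\<gamma>}"
      then obtain i where i: "i < length l" "l ! i = \<eta>" by (meson DiffD1 in_set_conv_nth)
      have "i \<noteq> 0"
      proof
        assume "i = 0"
        hence "\<eta> = \<gamma>" using i l0 by simp
        thus False using h by simp
      qed
      hence "\<eta> \<in> NN" using br_src_nz[OF l(1), of i] br_arr[OF l(1)] i unfolding NN_def by auto
      moreover have "rho \<eta> = \<gamma>" using rho_br[OF l(1) i(1)] i l0 by simp
      ultimately show "\<eta> \<in> {\<eta>\<in>NN. rho \<eta> = \<gamma>}" by blast
    qed
  qed
  have "sum ?g (set l) = sum_list (map ?g l)" using br_distinct[OF l(1)] by (rule sum_list_distinct_conv_sum_set[symmetric])
  also have "\<dots> = c (tgt Q (last l)) - c (src Q (hd l))" 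
    by (rule tele[OF _ ne]) (use l(1) in \<open>simp add: br_def\<close>)
  also have "\<dots> = c w - c z" using l(1) unfolding br_def by simp
  finally have S1: "sum ?g (set l) = c w - c z" .
  have gl: "\<gamma> \<in> set l" using nth_mem[OF l(2)] l(3) by simp
  have "sum ?g (set l) = ?g \<gamma> + sum ?g (set l - {\<gamma>})"
    by (rule sum.remove[OF finite_set gl])
  thus ?thesis unfolding seq S1 by (simp add: algebra_simps)
qed



lemma span: "\<phi> \<in> ImD0 Q II \<Longrightarrow> \<exists>F d. finite F \<and> F \<subseteq> KK \<and> hom_eq Q II \<phi> (\<Sum>f\<in>F. hsmult (d f) f)"
proof -
  assume "\<phi> \<in> ImD0 Q II"
  then obtain c where hc: "hom_eq Q II \<phi> (psi c)" unfolding ImD0_def by blast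
  define g where "g = (\<lambda>\<gamma>. c (tgt Q \<gamma>) - c (src Q \<gamma>))"
  define d where "d = (\<lambda>f. if f = sE then c w - c z else g (SOME \<eta>. \<eta> \<in> NN \<and> f = e \<eta>))"
  have de: "\<eta> \<in> NN \<Longrightarrow> d (e \<eta>) = g \<eta>" for \<eta>
  proof -
    assume h: "\<eta> \<in> NN"
    have ne: "e \<eta> \<noteq> sE"
    proof
      assume "e \<eta> = sE"
      moreover have "e \<eta> \<in> e ` NN" by (rule imageI[OF h])
      ultimately show False using s_notin by simp
    qed
    have "(SOME \<eta>'. \<eta>' \<in> NN \<and> e \<eta> = e \<eta>') = \<eta>"
    proof (rule some_equality)
      show "\<eta> \<in> NN \<and> e \<eta> = e \<eta>" using h by simp
      fix \<eta>' assume "\<eta>' \<in> NN \<and> e \<eta> = e \<eta>'"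
      thus "\<eta>' = \<eta>" using e_inj h by (metis inj_onD)
    qed
    thus ?thesis unfolding d_def using ne by simp
  qed
  let ?S = "\<Sum>f\<in>KK. hsmult (d f) f"
  have ALS: "AL ?S" by (intro AL_sum AL_sm AL_K)
  have "\<forall>\<gamma>\<in>arrs Q. psi c \<gamma> = ?S \<gamma>"
  proof
    fix \<gamma> assume g: "\<gamma> \<in> arrs Q"
    have "cv ?S \<gamma> = d sE * cv sE \<gamma> + (\<Sum>f\<in>e ` NN. d f * cv f \<gamma>)"
      using finNN s_notin by (simp add: cv_sum cv_sm cv_add)
    also have "(\<Sum>f\<in>e ` NN. d f * cv f \<gamma>) = (\<Sum>\<eta>\<in>NN. g \<eta> * cv (e \<eta>) \<gamma>)"
      by (simp add: sum.reindex[OF e_inj] de)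
    also have "\<dots> = (\<Sum>\<eta>\<in>NN. (if \<eta> = \<gamma> then g \<eta> else 0)) - (\<Sum>\<eta>\<in>NN. (if rho \<eta> = \<gamma> then g \<eta> else 0))"
      by (subst sum_subtractf[symmetric], rule sum.cong) (auto simp: cv_e)
    also have "(\<Sum>\<eta>\<in>NN. (if rho \<eta> = \<gamma> then g \<eta> else 0)) = (\<Sum>\<eta>\<in>{\<eta>\<in>NN. rho \<eta> = \<gamma>}. g \<eta>)"
      using finNN by (simp add: sum.inter_filter)
    finally have eq: "cv ?S \<gamma> = d sE * cv sE \<gamma> + ((\<Sum>\<eta>\<in>NN. (if \<eta> = \<gamma> then g \<eta> else 0)) - (\<Sum>\<eta>\<in>{\<eta>\<in>NN. rho \<eta> = \<gamma>}. g \<eta>))" .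
    have "cv ?S \<gamma> = g \<gamma>"
    proof (cases "src Q \<gamma> = z")
      case True
      have "\<gamma> \<notin> NN" using True unfolding NN_def by simp
      hence "(\<Sum>\<eta>\<in>NN. (if \<eta> = \<gamma> then g \<eta> else 0)) = 0" by (auto intro: sum.neutral)
      moreover have "(\<Sum>\<eta>\<in>{\<eta>\<in>NN. rho \<eta> = \<gamma>}. g \<eta>) = (c w - c z) - g \<gamma>"
        unfolding g_def by (rule first_sum[OF g True])
      moreover have "d sE = c w - c z" unfolding d_def by simp
      ultimately show ?thesis using eq cv_s[OF g] True by simp
    next
      case False
      have gN: "\<gamma> \<in> NN" using False g unfolding NN_def by simp
      have "{\<eta>\<in>NN. rho \<eta> = \<gamma>} = {}" using rhoNN False by auto
      hence "(\<Sum>\<eta>\<in>{\<eta>\<in>NN. rho \<eta> = \<gamma>}. g \<eta>) = 0" by (simp only: sum.empty)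
      moreover have "(\<Sum>\<eta>\<in>NN. (if \<eta> = \<gamma> then g \<eta> else 0)) = g \<gamma>" using finNN gN by simp
      ultimately show ?thesis using eq cv_s[OF g] False by simp
    qed
    hence "cv (psi c) \<gamma> = cv ?S \<gamma>" using cv_psi[OF g] unfolding g_def by simp
    thus "psi c \<gamma> = ?S \<gamma>" by (rule AL_eq[OF AL_psi ALS])
  qed
  hence "hom_eq Q II \<phi> ?S" by (rule hom_eq_tr[OF hc])
  thus ?thesis using finK by blast
qed

lemma indep: "finite F \<Longrightarrow> F \<subseteq> KK \<Longrightarrow> hom_eq Q II (\<Sum>f\<in>F. hsmult (d f) f) 0 \<Longrightarrow> \<forall>f\<in>F. d f = 0"
proof -
  assume F: "finite F" "F \<subseteq> KK" and h: "hom_eq Q II (\<Sum>f\<in>F. hsmult (d f) f) 0"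
  have "AL (\<Sum>f\<in>F. hsmult (d f) f)" using F by (intro AL_sum AL_sm AL_K) auto
  hence z0: "\<forall>\<gamma>\<in>arrs Q. (\<Sum>f\<in>F. d f * cv f \<gamma>) = 0"
    using h hom_eq_AL[OF _ AL_zero] by (simp add: cv_sum cv_sm cv_zero)
  have c1: "d (e \<eta>) = 0" if eta: "\<eta> \<in> NN" "e \<eta> \<in> F" for \<eta>
  proof -
    have "\<forall>f\<in>F. d f * cv f \<eta> = (if f = e \<eta> then d f else 0)"
    proof
      fix f assume "f \<in> F"
      hence "f \<in> KK" using F by blast
      thus "d f * cv f \<eta> = (if f = e \<eta> then d f else 0)"
      proof
        assume fs: "f = sE"
        have "cv sE \<eta> = 0" using cv_s eta unfolding NN_def by auto
        moreover have "f \<noteq> e \<eta>" using fs s_notin eta by auto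
        ultimately show ?thesis using fs by simp
      next
        assume "f \<in> e ` NN"
        then obtain \<eta>' where e': "\<eta>' \<in> NN" "f = e \<eta>'" by blast
        have "f = e \<eta> \<longleftrightarrow> \<eta> = \<eta>'" using e_inj e' eta by (metis inj_onD)
        thus ?thesis using cv_e_NN[OF eta(1) e'(1)] e' by auto
      qed
    qed
    hence "(\<Sum>f\<in>F. d f * cv f \<eta>) = (\<Sum>f\<in>F. (if f = e \<eta> then d f else 0))" by (intro sum.cong) auto
    also have "\<dots> = d (e \<eta>)" using F eta by simp
    finally show ?thesis using z0 eta unfolding NN_def by auto
  qed
  have c2: "d sE = 0" if sF: "sE \<in> F"
  proof -
    obtain \<gamma> where g: "\<gamma> \<in> arrs Q" "src Q \<gamma> = z" using has_out zv zw by blast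
    have rest: "(\<Sum>f\<in>F - {sE}. d f * cv f \<gamma>) = 0"
    proof (rule sum.neutral, rule ballI)
      fix f assume "f \<in> F - {sE}"
      then obtain \<eta> where "\<eta> \<in> NN" "f = e \<eta>" "e \<eta> \<in> F" using F by blast
      thus "d f * cv f \<gamma> = 0" using c1 by simp
    qed
    have "(\<Sum>f\<in>F. d f * cv f \<gamma>) = d sE * cv sE \<gamma> + (\<Sum>f\<in>F - {sE}. d f * cv f \<gamma>)"
      using F sF by (simp add: sum.remove)
    thus ?thesis using rest z0 g cv_s[OF g(1)] by simp
  qed
  show "\<forall>f\<in>F. d f = 0"
  proof
    fix f assume "f \<in> F"
    hence "f = sE \<or> (\<exists>\<eta>\<in>NN. f = e \<eta>)" using F by blast
    thus "d f = 0" using c1 c2 \<open>f \<in> F\<close> by blast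
  qed
qed

theorem main: "hom_basis Q II ({sE} \<union> C1k \<union> C3k) (ImD0 Q II)"
  unfolding hom_basis_def K_eq using K_sub span indep by blast

end

theorem lemma3p4:
  fixes Q :: "('v, 'a) quiver" and z w :: 'v and Mon :: "('v, 'a) path set"
    and NM :: "(('v, 'a) path \<Rightarrow> 'k::field_char_0) set"
  assumes "toupie_alg Q z w Mon NM"
  shows "hom_basis Q (rel_ideal Q Mon NM)
           ({s_elem Q z w} \<union> C1' Q z w Mon \<union> C3 Q z w Mon)
           (ImD0 Q (rel_ideal Q Mon NM))"
proof -
  interpret TA Q z w Mon NM using assms by unfold_locales
  show ?thesis by (rule main)
qed

end
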